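(* Let $m\ge1$ and consider a preferential (dynamic) attachment circuit of index $m$. For a fixed node label $j\ge0$ let $D^{(m)}_{n,j}$ be the degree (indegree plus outdegree, edges counted with multiplicity) of node $j$ at time $n\ge j$. Then, as $n\to\infty$, $$\mathbb{E}\bigl[D^{(m)}_{n,j}\bigr]\sim\frac{\Gamma\bigl(j+\frac1{m+1}\bigr)}{\Gamma(j+1)}\,n^{\frac m{m+1}},\qquad \mathbb{V}\mathrm{ar}\bigl[D^{(m)}_{n,j}\bigr]\sim\left(\frac{2(m+1)\,\Gamma\bigl(j+\frac2{m+1}\bigr)}{((m+1)j+1)\,\Gamma(j+1)}-\frac{\Gamma^2\bigl(j+\frac1{m+1}\bigr)}{\Gamma^2(j+1)}\right)n^{\frac{2m}{m+1}}.$$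
   Context: Preferential (dynamic) attachment circuit of index $m\ge1$: at time $0$ there is a single node labeled $0$. At each time $n\ge1$ a new node labeled $n$ is added and $m$ parents are chosen for it one at a time, with replacement, among nodes $0,\dots,n-1$. Before the $(i+1)$-th choice ($i=0,\dots,m-1$), each existing node $v$ is chosen with probability $\frac{d_i(v)+1}{\sum_{x}(d_i(x)+1)}$, where $d_i(x)$ is the outdegree of $x$ in the current multigraph including the edges created by the first $i$ choices for node $n$; after each choice an edge from the chosen parent to node $n$ is immediately added (multi-edges allowed). *)

theory Defs
  imports "HOL-Probability.Probability" "HOL-Library.Landau_Symbols"
begin

text \<open>The multigraph is a multiset of directed edges (parent, child).\<close>

definition outdeg :: "(nat \<times> nat) multiset \<Rightarrow> nat \<Rightarrow> nat" where
  "outdeg E x = size (filter_mset (\<lambda>e. fst e = x) E)"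

definition indeg :: "(nat \<times> nat) multiset \<Rightarrow> nat \<Rightarrow> nat" where
  "indeg E x = size (filter_mset (\<lambda>e. snd e = x) E)"

definition degree :: "(nat \<times> nat) multiset \<Rightarrow> nat \<Rightarrow> nat" where
  "degree E x = indeg E x + outdeg E x"

text \<open>Choose a parent among nodes 0..n-1, node v with probability proportional to
  outdeg v + 1 (uniform draw from the multiset where v occurs outdeg v + 1 times).\<close>
definition choose_parent :: "nat \<Rightarrow> (nat \<times> nat) multiset \<Rightarrow> nat pmf" where
  "choose_parent n E = pmf_of_multiset (\<Sum>v<n. replicate_mset (outdeg E v + 1) v)"

fun add_parents :: "nat \<Rightarrow> (nat \<times> nat) multiset \<Rightarrow> nat \<Rightarrow> (nat \<times> nat) multiset pmf" where
  "add_parents n E 0 = return_pmf E"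
| "add_parents n E (Suc i) =
     bind_pmf (add_parents n E i) (\<lambda>E'. map_pmf (\<lambda>v. add_mset (v, n) E') (choose_parent n E'))"

fun pa_circuit :: "nat \<Rightarrow> nat \<Rightarrow> (nat \<times> nat) multiset pmf" where
  "pa_circuit m 0 = return_pmf {#}"
| "pa_circuit m (Suc n) = bind_pmf (pa_circuit m n) (\<lambda>E. add_parents (Suc n) E m)"

end

theory Submission
  imports Defs "HOL-Real_Asymp.Real_Asymp"
begin


lemma aux_div: "(x1::real) \<noteq> 0 \<Longrightarrow> x2 \<noteq> 0 \<Longrightarrow> x3 \<noteq> 0 \<Longrightarrow> x4/(x2*x1)*(x1/x3) = x4/(x2*x3)"
  by (simp add: field_simps)

lemma fact_poch_limit:
  fixes z :: real assumes z: "z > 0"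
  shows "(\<lambda>n. fact n / pochhammer z n / real n powr (1 - z)) \<longlonglongrightarrow> Gamma z"
proof -
  have lim1: "(\<lambda>n. (z + real n) / real n) \<longlonglongrightarrow> 1"
    by real_asymp
  have "(\<lambda>n. Gamma_series z n * ((z + real n) / real n)) \<longlonglongrightarrow> Gamma z * 1"
    by (intro tendsto_mult Gamma_series_LIMSEQ lim1)
  moreover have "eventually (\<lambda>n. Gamma_series z n * ((z + real n) / real n)
      = fact n / pochhammer z n / real n powr (1 - z)) sequentially"
    using eventually_gt_at_top[of "0::nat"]
  proof eventually_elim
    case (elim n)
    have p: "pochhammer z n > 0" using z by (simp add: pochhammer_pos)
    have zn: "z + real n > 0" using z by simp
    have n0: "real n > 0" using elim by simp
    have w: "real n powr z > 0" using n0 by simp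
    have "Gamma_series z n = fact n * real n powr z / (pochhammer z n * (z + real n))"
      using elim by (simp add: Gamma_series_def pochhammer_Suc powr_def)
    hence e1: "Gamma_series z n * ((z + real n) / real n) = fact n * real n powr z / (pochhammer z n * real n)"
      using zn n0 p aux_div[of "z + real n" "pochhammer z n" "real n" "fact n * real n powr z"] by simp
    have e2: "real n powr (1 - z) = real n / real n powr z"
      using elim by (simp add: powr_diff)
    have e3: "fact n * real n powr z / (pochhammer z n * real n) = fact n / pochhammer z n / (real n / real n powr z)"
      using w n0 p by (simp add: field_simps)
    show ?case unfolding e1 e2 e3 ..
  qed
  ultimately show ?thesis by (simp add: tendsto_cong)
qed

lemma poch_sq_ineq:
  fixes x c :: real assumes c: "0 < c" "c < x"
  shows "pochhammer (x-c) (Suc k) * pochhammer (x+c) (Suc k) * x^2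
          \<le> (pochhammer x (Suc k))^2 * (x^2 - c^2)"
proof (induction k)
  case 0
  then show ?case by (simp add: power2_eq_square algebra_simps)
next
  case (Suc k)
  let ?a = "pochhammer (x-c) (Suc k) * pochhammer (x+c) (Suc k) * x^2"
  let ?b = "(pochhammer x (Suc k))^2 * (x^2 - c^2)"
  have f1: "(x - c + real (Suc k)) * (x + c + real (Suc k)) \<le> (x + real (Suc k))^2"
    by (simp add: power2_eq_square algebra_simps)
  have f2: "0 \<le> (x - c + real (Suc k)) * (x + c + real (Suc k))" using c by simp
  have xc0: "x^2 - c^2 \<ge> 0"
  proof -
    have "x^2 - c^2 = (x - c) * (x + c)" by (simp add: power2_eq_square algebra_simps)
    moreover have "(x - c) * (x + c) > 0" using c by simp
    ultimately show ?thesis by simp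
  qed
  have "?a * ((x - c + real (Suc k)) * (x + c + real (Suc k))) \<le> ?b * (x + real (Suc k))^2"
    by (rule mult_mono[OF Suc.IH f1 _ f2]) (use c xc0 in \<open>simp add: pochhammer_nonneg\<close>)
  moreover have "pochhammer (x-c) (Suc (Suc k)) * pochhammer (x+c) (Suc (Suc k)) * x^2
     = ?a * ((x - c + real (Suc k)) * (x + c + real (Suc k)))"
    by (simp only: pochhammer_Suc[of _ "Suc k"] mult_ac)
  moreover have "(pochhammer x (Suc (Suc k)))^2 * (x^2 - c^2) = ?b * (x + real (Suc k))^2"
    by (simp only: pochhammer_Suc[of _ "Suc k"] power_mult_distrib mult_ac)
  ultimately show ?case by (simp only:)
qed

lemma Gamma_sq_less:

  fixes x c :: real assumes c: "0 < c" "c < x"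
  shows "(Gamma x)^2 < Gamma (x - c) * Gamma (x + c)"
proof -
  define q where "q = x^2 / (x^2 - c^2)"
  have xc: "x^2 - c^2 > 0"
  proof -
    have "x^2 - c^2 = (x - c) * (x + c)" by (simp add: power2_eq_square algebra_simps)
    moreover have "(x - c) * (x + c) > 0" using c by simp
    ultimately show ?thesis by simp
  qed
  have q1: "q > 1" unfolding q_def using xc c by (simp add: field_simps)
  have ineq: "q * (Gamma_series x n)^2 \<le> Gamma_series (x-c) n * Gamma_series (x+c) n" for n
  proof -
    define K where "K = fact n * exp (x * ln (real n))"
    define A where "A = pochhammer (x-c) (Suc n) * pochhammer (x+c) (Suc n)"
    define B where "B = (pochhammer x (Suc n))^2"
    have K0: "K \<ge> 0" unfolding K_def by simp
    have A0: "A > 0" unfolding A_def using c by (simp add: pochhammer_pos)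
    have B0: "B > 0" unfolding B_def using c
      by (metis less_trans pochhammer_pos power2_less_0 zero_less_power2 less_irrefl)
    have AB: "q * A \<le> B" using poch_sq_ineq[OF c, of n] xc unfolding q_def A_def B_def
      by (simp add: field_simps)
    have L: "Gamma_series (x-c) n * Gamma_series (x+c) n = K^2 / A"
    proof -
      have ee: "exp ((x-c) * ln (real n)) * exp ((x+c) * ln (real n)) = (exp (x * ln (real n)))^2"
      proof -
        have "(x-c) * ln (real n) + (x+c) * ln (real n) = x * ln (real n) + x * ln (real n)"
          by (simp add: algebra_simps)
        thus ?thesis by (simp add: power2_eq_square exp_add[symmetric])
      qed
      have "Gamma_series (x-c) n * Gamma_series (x+c) n
          = (fact n)^2 * (exp ((x-c) * ln (real n)) * exp ((x+c) * ln (real n))) / A"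
        unfolding Gamma_series_def A_def by (simp add: power2_eq_square)
      also have "\<dots> = K^2 / A" unfolding ee K_def by (simp add: power_mult_distrib)
      finally show ?thesis .
    qed
    have R: "q * (Gamma_series x n)^2 = q * K^2 / B"
      unfolding K_def B_def Gamma_series_def by (simp add: power2_eq_square field_simps)
    have "q * K^2 / B \<le> K^2 / A"
    proof -
      have "A * q * K^2 \<le> B * K^2" using AB by (intro mult_right_mono) (simp_all add: mult.commute)
      thus ?thesis using A0 B0 by (simp add: field_simps)
    qed
    thus ?thesis using L R by simp
  qed
  have "q * (Gamma x)^2 \<le> Gamma (x-c) * Gamma (x+c)"
    by (rule LIMSEQ_le[where X="\<lambda>n. q * (Gamma_series x n)^2" and Y="\<lambda>n. Gamma_series (x-c) n * Gamma_series (x+c) n"])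
       (auto intro!: tendsto_intros ineq)
  moreover have "(Gamma x)^2 > 0"
  proof -
    have "x > 0" using c by simp
    hence "Gamma x > 0" by (rule Gamma_real_pos)
    thus ?thesis by simp
  qed
  ultimately show ?thesis using q1
  proof -
    assume a: "q * (Gamma x)^2 \<le> Gamma (x-c) * Gamma (x+c)" and b: "(Gamma x)^2 > 0" and "q > 1"
    hence "(Gamma x)^2 < q * (Gamma x)^2" by simp
    thus ?thesis using a by linarith
  qed
qed



declare replicate_mset_Suc[simp del]

lemma sum_Suc_lt: "(\<Sum>v<N. Suc (f v)) = N + (\<Sum>v<(N::nat). f v)"
  by (induction N) auto

abbreviation PM :: "nat \<Rightarrow> (nat \<times> nat) multiset \<Rightarrow> nat multiset" where
  "PM N E \<equiv> (\<Sum>v<N. replicate_mset (outdeg E v + 1) v)"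

lemma PM_count: "count (PM N E) j = (if j < N then outdeg E j + 1 else 0)"
  by (simp add: count_sum)

lemma PM_size: "size (PM N E) = N + (\<Sum>v<N. outdeg E v)"
  by (simp add: sum_Suc_lt)

lemma PM_nonempty: "0 < N \<Longrightarrow> PM N E \<noteq> {#}"
proof
  assume "0 < N" "PM N E = {#}"
  hence "count (PM N E) 0 = 0" by simp
  with \<open>0 < N\<close> show False by (simp only: PM_count) simp
qed

lemma set_PM: "set_mset (PM N E) = {..<N}"
proof (rule set_eqI)
  fix x
  have "x \<in># PM N E \<longleftrightarrow> count (PM N E) x > 0" by (simp only: count_greater_zero_iff)
  also have "\<dots> \<longleftrightarrow> x < N" by (simp only: PM_count) simp
  finally show "x \<in># PM N E \<longleftrightarrow> x \<in> {..<N}" by simp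
qed

lemma set_choose_parent: "0 < N \<Longrightarrow> set_pmf (choose_parent N E) = {..<N}"
  unfolding choose_parent_def by (simp only: set_pmf_of_multiset[OF PM_nonempty] set_PM)

lemma pmf_choose_parent: "0 < N \<Longrightarrow> pmf (choose_parent N E) j =
    real (if j < N then outdeg E j + 1 else 0) / real (N + (\<Sum>v<N. outdeg E v))"
  unfolding choose_parent_def by (simp only: pmf_of_multiset[OF PM_nonempty] PM_count PM_size)

lemma outdeg_add: "outdeg (add_mset (v, N) E) j = outdeg E j + (if v = j then 1 else 0)"
  by (simp add: outdeg_def)

lemma indeg_add: "indeg (add_mset (v, N) E) j = indeg E j + (if N = j then 1 else 0)"
  by (simp add: indeg_def)

lemma sum_outdeg: "(\<forall>e\<in>#E. fst e < N) \<Longrightarrow> (\<Sum>v<N. outdeg E v) = size E"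
proof (induction E)
  case empty
  then show ?case by (simp add: outdeg_def)
next
  case (add e E)
  have o: "outdeg (add_mset e E) v = outdeg E v + (if fst e = v then 1 else 0)" for v
    by (simp add: outdeg_def)
  have "(\<Sum>v<N. outdeg (add_mset e E) v) = (\<Sum>v<N. outdeg E v) + (\<Sum>v<N. (if fst e = v then 1 else 0))"
    by (simp add: o sum.distrib)
  also have "(\<Sum>v<N. (if fst e = v then 1 else (0::nat))) = 1"
    using add.prems by (simp add: sum.delta)
  finally show ?case using add by simp
qed

lemma add_parents_supp:
  assumes "0 < N"
  shows "E' \<in> set_pmf (add_parents N E i) \<Longrightarrow> size E' = size E + i \<and>
     (\<forall>e\<in>#E'. e \<in># E \<or> (fst e < N \<and> snd e = N)) \<and>
     (\<forall>k. indeg E' k = indeg E k + (if k = N then i else 0))"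
proof (induction i arbitrary: E')
  case 0
  then show ?case by simp
next
  case (Suc i)
  then obtain E'' v where E'': "E'' \<in> set_pmf (add_parents N E i)" and v: "v < N"
    and E': "E' = add_mset (v, N) E''"
    using set_choose_parent[OF assms] by auto
  from Suc.IH[OF E''] v show ?case unfolding E' by (auto simp: indeg_add)
qed

lemma finite_add_parents: "0 < N \<Longrightarrow> finite (set_pmf (add_parents N E i))"
  by (induction i) (auto simp: set_choose_parent)

lemma pa_supp:
  "E \<in> set_pmf (pa_circuit m n) \<Longrightarrow> size E = m * n \<and>
     (\<forall>e\<in>#E. fst e < snd e \<and> snd e \<le> n) \<and>
     (\<forall>k. indeg E k = (if 1 \<le> k \<and> k \<le> n then m else 0))"
proof (induction n arbitrary: E)
  case 0
  then show ?case by (simp add: indeg_def)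
next
  case (Suc n)
  then obtain E0 where E0: "E0 \<in> set_pmf (pa_circuit m n)"
    and E: "E \<in> set_pmf (add_parents (Suc n) E0 m)" by auto
  note I = Suc.IH[OF E0]
  note A = add_parents_supp[OF _ E, simplified]
  show ?case
  proof (intro conjI)
    show "size E = m * Suc n" using I A by simp
    show "\<forall>e\<in>#E. fst e < snd e \<and> snd e \<le> Suc n" using I A by fastforce
    show "\<forall>k. indeg E k = (if 1 \<le> k \<and> k \<le> Suc n then m else 0)" using I A by auto
  qed
qed

lemma finite_pa: "finite (set_pmf (pa_circuit m n))"
  by (induction n) (auto simp: finite_add_parents)

lemma exp_bind:
  fixes h :: "'b \<Rightarrow> real"
  assumes fin: "finite (set_pmf p)" "\<And>x. x \<in> set_pmf p \<Longrightarrow> finite (set_pmf (f x))"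
  shows "measure_pmf.expectation (bind_pmf p f) h =
         measure_pmf.expectation p (\<lambda>x. measure_pmf.expectation (f x) h)"
proof -
  define T where "T = (\<Union>x\<in>set_pmf p. set_pmf (f x))"
  have T: "finite T" unfolding T_def using fin by auto
  have L: "measure_pmf.expectation (bind_pmf p f) h = (\<Sum>y\<in>T. h y * pmf (bind_pmf p f) y)"
    by (rule integral_measure_pmf_real[OF T]) (auto simp: T_def)
  have pb: "pmf (bind_pmf p f) y = (\<Sum>x\<in>set_pmf p. pmf (f x) y * pmf p x)" for y
    unfolding pmf_bind by (rule integral_measure_pmf_real) (auto simp: fin)
  have inner: "measure_pmf.expectation (f x) h = (\<Sum>y\<in>T. h y * pmf (f x) y)" if "x \<in> set_pmf p" for x
    by (rule integral_measure_pmf_real[OF T]) (use that in \<open>auto simp: T_def\<close>)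
  have R: "measure_pmf.expectation p (\<lambda>x. measure_pmf.expectation (f x) h)
      = (\<Sum>x\<in>set_pmf p. measure_pmf.expectation (f x) h * pmf p x)"
    by (rule integral_measure_pmf_real) (auto simp: fin)
  also have "\<dots> = (\<Sum>x\<in>set_pmf p. (\<Sum>y\<in>T. h y * pmf (f x) y) * pmf p x)"
    by (rule sum.cong) (simp_all add: inner)
  also have "\<dots> = (\<Sum>y\<in>T. h y * (\<Sum>x\<in>set_pmf p. pmf (f x) y * pmf p x))"
    by (simp add: sum_distrib_left sum_distrib_right mult_ac sum.swap[of _ T])
  finally show ?thesis using L pb by simp
qed



definition F :: "nat \<Rightarrow> (nat \<times> nat) multiset \<Rightarrow> real" where
  "F j E = real (outdeg E j) + 1"

definition Gf :: "nat \<Rightarrow> (nat \<times> nat) multiset \<Rightarrow> real" where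
  "Gf j E = F j E * (F j E + 1)"

lemma exp_cong: "(\<And>x. x \<in> set_pmf p \<Longrightarrow> f x = g x) \<Longrightarrow>
   measure_pmf.expectation p f = measure_pmf.expectation p (g :: _ \<Rightarrow> real)"
  by (rule integral_cong_AE) (auto simp: AE_measure_pmf_iff)

lemma exp_lin_ind:
  assumes "finite (set_pmf p)"
  shows "measure_pmf.expectation p (\<lambda>v. a + b * indicator {j} v) = a + b * pmf p j"
proof -
  have i1: "integrable (measure_pmf p) (\<lambda>v. a)" and
       i2: "integrable (measure_pmf p) (\<lambda>v. b * indicator {j} v :: real)"
    using assms by (auto intro: integrable_measure_pmf_finite)
  have "measure_pmf.expectation p (\<lambda>v. a + b * indicator {j} v) =
      measure_pmf.expectation p (\<lambda>v. a) + measure_pmf.expectation p (\<lambda>v. b * indicator {j} v)"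
    by (rule Bochner_Integration.integral_add[OF i1 i2])
  also have "\<dots> = a + b * pmf p j"
    by (simp add: measure_pmf_single)
  finally show ?thesis .
qed

lemma F_add: "F j (add_mset (v, N) E) = F j E + indicator {j} v"
  by (simp add: F_def outdeg_add indicator_def)

lemma Gf_add: "Gf j (add_mset (v, N) E) = Gf j E + (2 * F j E + 2) * indicator {j} v"
  by (simp add: Gf_def F_add indicator_def algebra_simps)

lemma pmf_choose_j:
  assumes "0 < N" "j < N" "\<forall>e\<in>#E. fst e < N"
  shows "pmf (choose_parent N E) j = F j E / real (N + size E)"
  using assms by (simp add: pmf_choose_parent sum_outdeg F_def)

lemma choose_exp_F:
  assumes "0 < N" "j < N" "\<forall>e\<in>#E. fst e < N"
  shows "measure_pmf.expectation (choose_parent N E) (\<lambda>v. F j (add_mset (v, N) E))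
     = F j E * (1 + 1 / real (N + size E))"
proof -
  have "measure_pmf.expectation (choose_parent N E) (\<lambda>v. F j (add_mset (v, N) E))
     = measure_pmf.expectation (choose_parent N E) (\<lambda>v. F j E + 1 * indicator {j} v)"
    by (simp add: F_add)
  also have "\<dots> = F j E + 1 * (F j E / real (N + size E))"
    using assms by (subst exp_lin_ind) (simp_all only: set_choose_parent pmf_choose_j finite_lessThan)
  finally show ?thesis by (simp add: algebra_simps)
qed

lemma choose_exp_G:
  assumes "0 < N" "j < N" "\<forall>e\<in>#E. fst e < N"
  shows "measure_pmf.expectation (choose_parent N E) (\<lambda>v. Gf j (add_mset (v, N) E))
     = Gf j E * (1 + 2 / real (N + size E))"
proof -
  have "measure_pmf.expectation (choose_parent N E) (\<lambda>v. Gf j (add_mset (v, N) E))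
     = measure_pmf.expectation (choose_parent N E) (\<lambda>v. Gf j E + (2 * F j E + 2) * indicator {j} v)"
    by (simp add: Gf_add)
  also have "\<dots> = Gf j E + (2 * F j E + 2) * (F j E / real (N + size E))"
    using assms by (subst exp_lin_ind) (simp_all only: set_choose_parent pmf_choose_j finite_lessThan)
  finally show ?thesis by (simp add: Gf_def algebra_simps add_divide_distrib)
qed

lemma add_parents_exp_F:
  assumes N: "0 < N" and j: "j < N" and E: "\<forall>e\<in>#E. fst e < N"
  shows "measure_pmf.expectation (add_parents N E i) (F j)
     = F j E * (\<Prod>l<i. 1 + 1 / real (N + size E + l))"
proof (induction i)
  case 0
  then show ?case by simp
next
  case (Suc i)
  let ?p = "add_parents N E i"
  have fin: "finite (set_pmf ?p)" using N by (rule finite_add_parents)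
  have "measure_pmf.expectation (add_parents N E (Suc i)) (F j)
     = measure_pmf.expectation ?p (\<lambda>E'. measure_pmf.expectation
          (map_pmf (\<lambda>v. add_mset (v, N) E') (choose_parent N E')) (F j))"
    by (simp only: add_parents.simps, rule exp_bind)
       (use fin N in \<open>auto simp: set_choose_parent\<close>)
  also have "\<dots> = measure_pmf.expectation ?p (\<lambda>E'. F j E' * (1 + 1 / real (N + size E + i)))"
  proof (rule exp_cong)
    fix E' assume E': "E' \<in> set_pmf ?p"
    note S = add_parents_supp[OF N E']
    have E'N: "\<forall>e\<in>#E'. fst e < N" using S E by auto
    have sz: "size E' = size E + i" using S by simp
    show "measure_pmf.expectation (map_pmf (\<lambda>v. add_mset (v, N) E') (choose_parent N E')) (F j)
        = F j E' * (1 + 1 / real (N + size E + i))"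
      using choose_exp_F[OF N j E'N] sz by (simp add: add.assoc)
  qed
  also have "\<dots> = measure_pmf.expectation ?p (F j) * (1 + 1 / real (N + size E + i))"
    by (rule integral_mult_left_zero)
  finally show ?case by (simp add: Suc.IH)
qed

lemma add_parents_exp_G:
  assumes N: "0 < N" and j: "j < N" and E: "\<forall>e\<in>#E. fst e < N"
  shows "measure_pmf.expectation (add_parents N E i) (Gf j)
     = Gf j E * (\<Prod>l<i. 1 + 2 / real (N + size E + l))"
proof (induction i)
  case 0
  then show ?case by simp
next
  case (Suc i)
  let ?p = "add_parents N E i"
  have fin: "finite (set_pmf ?p)" using N by (rule finite_add_parents)
  have "measure_pmf.expectation (add_parents N E (Suc i)) (Gf j)
     = measure_pmf.expectation ?p (\<lambda>E'. measure_pmf.expectation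
          (map_pmf (\<lambda>v. add_mset (v, N) E') (choose_parent N E')) (Gf j))"
    by (simp only: add_parents.simps, rule exp_bind)
       (use fin N in \<open>auto simp: set_choose_parent\<close>)
  also have "\<dots> = measure_pmf.expectation ?p (\<lambda>E'. Gf j E' * (1 + 2 / real (N + size E + i)))"
  proof (rule exp_cong)
    fix E' assume E': "E' \<in> set_pmf ?p"
    note S = add_parents_supp[OF N E']
    have E'N: "\<forall>e\<in>#E'. fst e < N" using S E by auto
    have sz: "size E' = size E + i" using S by simp
    show "measure_pmf.expectation (map_pmf (\<lambda>v. add_mset (v, N) E') (choose_parent N E')) (Gf j)
        = Gf j E' * (1 + 2 / real (N + size E + i))"
      using choose_exp_G[OF N j E'N] sz by (simp add: add.assoc)
  qed
  also have "\<dots> = measure_pmf.expectation ?p (Gf j) * (1 + 2 / real (N + size E + i))"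
    by (rule integral_mult_left_zero)
  finally show ?case by (simp add: Suc.IH)
qed



lemma F_small: "E \<in> set_pmf (pa_circuit m n) \<Longrightarrow> n \<le> j \<Longrightarrow> F j E = 1"
proof -
  assume E: "E \<in> set_pmf (pa_circuit m n)" and nj: "n \<le> j"
  have "\<forall>e\<in>#E. fst e \<noteq> j" using pa_supp[OF E] nj by fastforce
  hence "outdeg E j = 0" unfolding outdeg_def by (simp add: filter_mset_eq_mempty_iff)
  thus ?thesis by (simp add: F_def)
qed

lemma e_small: "n \<le> j \<Longrightarrow> measure_pmf.expectation (pa_circuit m n) (F j) = 1"
  using exp_cong[of "pa_circuit m n" "F j" "\<lambda>_. 1"] F_small by simp

lemma h_small: "n \<le> j \<Longrightarrow> measure_pmf.expectation (pa_circuit m n) (Gf j) = 2"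
  using exp_cong[of "pa_circuit m n" "Gf j" "\<lambda>_. 2"] F_small by (simp add: Gf_def)

lemma pa_step_gen:
  fixes H :: "(nat \<times> nat) multiset \<Rightarrow> real"
  assumes "j \<le> n"
  and H: "\<And>E. E \<in> set_pmf (pa_circuit m n) \<Longrightarrow>
        measure_pmf.expectation (add_parents (Suc n) E m) H = H E * c"
  shows "measure_pmf.expectation (pa_circuit m (Suc n)) H =
         measure_pmf.expectation (pa_circuit m n) H * c"
proof -
  have "measure_pmf.expectation (pa_circuit m (Suc n)) H =
     measure_pmf.expectation (pa_circuit m n) (\<lambda>E. measure_pmf.expectation (add_parents (Suc n) E m) H)"
    by (simp only: pa_circuit.simps, rule exp_bind) (auto simp: finite_pa finite_add_parents)
  also have "\<dots> = measure_pmf.expectation (pa_circuit m n) (\<lambda>E. H E * c)"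
    by (rule exp_cong) (rule H)
  also have "\<dots> = measure_pmf.expectation (pa_circuit m n) H * c"
    by (rule integral_mult_left_zero)
  finally show ?thesis .
qed

lemma e_step: "j \<le> n \<Longrightarrow> measure_pmf.expectation (pa_circuit m (Suc n)) (F j) =
    measure_pmf.expectation (pa_circuit m n) (F j) * (\<Prod>l<m. 1 + 1 / real (Suc n + m * n + l))"
proof (rule pa_step_gen)
  fix E assume "j \<le> n" and E: "E \<in> set_pmf (pa_circuit m n)"
  note S = pa_supp[OF E]
  have "\<forall>e\<in>#E. fst e < Suc n" using S by fastforce
  from add_parents_exp_F[OF _ _ this, of j m] \<open>j \<le> n\<close> S
  show "measure_pmf.expectation (add_parents (Suc n) E m) (F j) =
      F j E * (\<Prod>l<m. 1 + 1 / real (Suc n + m * n + l))" by simp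
qed

lemma h_step: "j \<le> n \<Longrightarrow> measure_pmf.expectation (pa_circuit m (Suc n)) (Gf j) =
    measure_pmf.expectation (pa_circuit m n) (Gf j) * (\<Prod>l<m. 1 + 2 / real (Suc n + m * n + l))"
proof (rule pa_step_gen)
  fix E assume "j \<le> n" and E: "E \<in> set_pmf (pa_circuit m n)"
  note S = pa_supp[OF E]
  have "\<forall>e\<in>#E. fst e < Suc n" using S by fastforce
  from add_parents_exp_G[OF _ _ this, of j m] \<open>j \<le> n\<close> S
  show "measure_pmf.expectation (add_parents (Suc n) E m) (Gf j) =
      Gf j E * (\<Prod>l<m. 1 + 2 / real (Suc n + m * n + l))" by simp
qed

lemma h1: "(a::real) > 0 \<Longrightarrow> b > 0 \<Longrightarrow> b / a * (1 + 1 / b) = (b + 1) / a"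
  by (simp add: field_simps)

lemma h2: "(D::real) > 0 \<Longrightarrow> b > 0 \<Longrightarrow> b * (b + 1) / D * (1 + 2 / b) = (b + 1) * (b + 1 + 1) / D"
  by (simp add: field_simps)

lemma tele1: "(a::real) > 0 \<Longrightarrow> (\<Prod>l<k. 1 + 1 / (a + real l)) = (a + real k) / a"
proof (induction k)
  case 0 then show ?case by simp
next
  case (Suc k)
  have p: "a + real k > 0" using Suc.prems by simp
  have "(a + real k) / a * (1 + 1 / (a + real k)) = (a + real (Suc k)) / a"
    using h1[OF Suc.prems p] by (simp only: of_nat_Suc add_ac)
  thus ?case using Suc by (simp only: prod.lessThan_Suc)
qed

lemma tele2: "(a::real) > 0 \<Longrightarrow> (\<Prod>l<k. 1 + 2 / (a + real l)) = (a + real k) * (a + real k + 1) / (a * (a + 1))"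
proof (induction k)
  case 0 then show ?case by simp
next
  case (Suc k)
  have p: "a + real k > 0" using Suc.prems by simp
  have "(a + real k) * (a + real k + 1) / (a * (a + 1)) * (1 + 2 / (a + real k))
      = (a + real (Suc k)) * (a + real (Suc k) + 1) / (a * (a + 1))"
    using h2[OF _ p, of "a * (a + 1)"] Suc.prems by (simp only: of_nat_Suc add_ac mult_pos_pos add_pos_pos zero_less_one)
  thus ?case using Suc by (simp only: prod.lessThan_Suc)
qed



lemma cancelD: "(D::real) \<noteq> 0 \<Longrightarrow> (P / D) / (Q / D) = P / Q"
  by (cases "Q = 0") (simp_all add: field_simps)

lemma ratio1:
  fixes x y :: real assumes x: "x \<ge> 0" and y: "y \<ge> 0"
  shows "(x + 1 + y * x + y) / (x + 1 + y * x) = (x + 1) / (x + 1 / (y + 1))"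
proof -
  have d1: "x + 1 / (y + 1) = (x * (y + 1) + 1) / (y + 1)" using y by (simp add: field_simps)
  have d2: "x + 1 = (x + 1) * (y + 1) / (y + 1)" using y by simp
  have "(x + 1) / (x + 1 / (y + 1)) = ((x + 1) * (y + 1)) / (x * (y + 1) + 1)"
    unfolding d1 by (subst d2, rule cancelD) (use y in simp)
  also have "(x + 1) * (y + 1) = x + 1 + y * x + y" by (simp add: algebra_simps)
  also have "x * (y + 1) + 1 = x + 1 + y * x" by (simp add: algebra_simps)
  finally show ?thesis by simp
qed

lemma ratio2:
  fixes x y :: real assumes x: "x \<ge> 0" and y: "y \<ge> 0"
  shows "(x + 1 + y * x + y) * (x + 1 + y * x + y + 1) / ((x + 1 + y * x) * (x + 1 + y * x + 1))
     = (x + 1 + 1 / (y + 1)) / (x + 1 / (y + 1)) * ((x + 1) / (x + 2 / (y + 1)))"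
proof -
  have y1: "y + 1 \<noteq> 0" using y by simp
  have d1: "x + 1 / (y + 1) = (x * (y + 1) + 1) / (y + 1)" using y by (simp add: field_simps)
  have d3: "x + 1 + 1 / (y + 1) = ((x + 1) * (y + 1) + 1) / (y + 1)" using y by (simp add: field_simps)
  have d4: "x + 2 / (y + 1) = (x * (y + 1) + 2) / (y + 1)" using y by (simp add: field_simps)
  have d2: "x + 1 = (x + 1) * (y + 1) / (y + 1)" using y by simp
  have "(x + 1 + 1 / (y + 1)) / (x + 1 / (y + 1)) = ((x + 1) * (y + 1) + 1) / (x * (y + 1) + 1)"
    unfolding d1 d3 by (rule cancelD[OF y1])
  moreover have "(x + 1) / (x + 2 / (y + 1)) = ((x + 1) * (y + 1)) / (x * (y + 1) + 2)"
    unfolding d4 by (subst d2, rule cancelD[OF y1])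
  ultimately have "(x + 1 + 1 / (y + 1)) / (x + 1 / (y + 1)) * ((x + 1) / (x + 2 / (y + 1)))
     = (((x + 1) * (y + 1) + 1) * ((x + 1) * (y + 1))) / ((x * (y + 1) + 1) * (x * (y + 1) + 2))"
    by simp
  also have "((x + 1) * (y + 1) + 1) * ((x + 1) * (y + 1)) = (x + 1 + y * x + y) * (x + 1 + y * x + y + 1)"
    by (simp add: algebra_simps)
  also have "(x * (y + 1) + 1) * (x * (y + 1) + 2) = (x + 1 + y * x) * (x + 1 + y * x + 1)"
    by (simp add: algebra_simps)
  finally show ?thesis by simp
qed



lemma prod1_eq: "(\<Prod>l<m. 1 + 1 / real (Suc n + m * n + l)) = (real n + 1) / (real n + 1 / (real m + 1))"
proof -
  have p: "real (Suc n + m * n) > 0" by (rule of_nat_0_less_iff[THEN iffD2]) simp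
  have "(\<Prod>l<m. 1 + 1 / real (Suc n + m * n + l)) = (real (Suc n + m * n) + real m) / real (Suc n + m * n)"
    using tele1[OF p, of m] by (simp add: add.assoc)
  also have "\<dots> = (real n + 1 + real m * real n + real m) / (real n + 1 + real m * real n)"
    by (simp add: algebra_simps)
  also have "\<dots> = (real n + 1) / (real n + 1 / (real m + 1))" by (rule ratio1) simp_all
  finally show ?thesis .
qed

lemma prod2_eq: "(\<Prod>l<m. 1 + 2 / real (Suc n + m * n + l)) =
   (real n + 1 + 1 / (real m + 1)) / (real n + 1 / (real m + 1)) * ((real n + 1) / (real n + 2 / (real m + 1)))"
proof -
  have p: "real (Suc n + m * n) > 0" by (rule of_nat_0_less_iff[THEN iffD2]) simp
  have "(\<Prod>l<m. 1 + 2 / real (Suc n + m * n + l)) =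
     (real (Suc n + m * n) + real m) * (real (Suc n + m * n) + real m + 1) / (real (Suc n + m * n) * (real (Suc n + m * n) + 1))"
    using tele2[OF p, of m] by (simp add: add.assoc)
  also have "\<dots> = (real n + 1 + real m * real n + real m) * (real n + 1 + real m * real n + real m + 1) /
       ((real n + 1 + real m * real n) * (real n + 1 + real m * real n + 1))"
    by (simp add: algebra_simps)
  also have "\<dots> = (real n + 1 + 1 / (real m + 1)) / (real n + 1 / (real m + 1)) * ((real n + 1) / (real n + 2 / (real m + 1)))"
    by (rule ratio2) simp_all
  finally show ?thesis .
qed

lemma gen_h: "(a::real) \<noteq> 0 \<Longrightarrow> b \<noteq> 0 \<Longrightarrow> r \<noteq> 0 \<Longrightarrow> P \<noteq> 0 \<Longrightarrow> fj \<noteq> 0 \<Longrightarrow>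
   2 * a / b * (fn / fj) * (Q / P) * (s / a * (t / r)) = 2 * s / b * ((t * fn) / fj) * (Q / (P * r))"
  by (simp add: field_simps)

lemma e_closed:
  assumes "j \<le> n"
  shows "measure_pmf.expectation (pa_circuit m n) (F j) =
     fact n / fact j * pochhammer (1 / (real m + 1)) j / pochhammer (1 / (real m + 1)) n"
  using assms
proof (induction n rule: nat_induct_at_least)
  case base
  have "pochhammer (1 / (real m + 1)) j > 0" by (simp add: pochhammer_pos)
  then show ?case by (simp add: e_small)
next
  case (Suc n)
  let ?c = "1 / (real m + 1)"
  have pn: "pochhammer ?c n > 0" by (simp add: pochhammer_pos)
  have nc: "real n + ?c > 0" by (simp add: add_nonneg_pos)
  have "measure_pmf.expectation (pa_circuit m (Suc n)) (F j) =
      fact n / fact j * pochhammer ?c j / pochhammer ?c n * ((real n + 1) / (real n + ?c))"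
    using e_step[OF Suc.hyps] Suc.IH prod1_eq by simp
  also have "\<dots> = fact (Suc n) / fact j * pochhammer ?c j / pochhammer ?c (Suc n)"
    using pn nc by (simp add: pochhammer_Suc fact_Suc field_simps)
  finally show ?case .
qed

lemma h_closed:
  assumes "j \<le> n"
  shows "measure_pmf.expectation (pa_circuit m n) (Gf j) =
     2 * (real n + 1 / (real m + 1)) / (real j + 1 / (real m + 1)) * (fact n / fact j)
       * (pochhammer (2 / (real m + 1)) j / pochhammer (2 / (real m + 1)) n)"
  using assms
proof (induction n rule: nat_induct_at_least)
  case base
  have pj: "pochhammer (2 / (real m + 1)) j > 0" by (simp add: pochhammer_pos)
  have jc: "real j + 1 / (real m + 1) > 0" by (simp add: add_nonneg_pos)
  have q: "2 * (real j + 1 / (real m + 1)) / (real j + 1 / (real m + 1)) = 2"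
    using jc by (intro nonzero_mult_div_cancel_right) simp
  show ?case by (simp only: h_small[OF order_refl] q) (use pj in simp)
next
  case (Suc n)
  let ?c = "1 / (real m + 1)"
  let ?d = "2 / (real m + 1)"
  have pn: "pochhammer ?d n > 0" by (simp add: pochhammer_pos)
  have nc: "real n + ?c > 0" by (simp add: add_nonneg_pos)
  have nd: "real n + ?d > 0" by (simp add: add_nonneg_pos)
  have jc: "real j + ?c > 0" by (simp add: add_nonneg_pos)
  have "measure_pmf.expectation (pa_circuit m (Suc n)) (Gf j) =
      2 * (real n + ?c) / (real j + ?c) * (fact n / fact j) * (pochhammer ?d j / pochhammer ?d n)
      * ((real n + 1 + ?c) / (real n + ?c) * ((real n + 1) / (real n + ?d)))"
    using h_step[OF Suc.hyps] Suc.IH prod2_eq by simp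
  also have "\<dots> = 2 * (real (Suc n) + ?c) / (real j + ?c) * (fact (Suc n) / fact j)
       * (pochhammer ?d j / pochhammer ?d (Suc n))"
  proof -
    have f: "(fact (Suc n) :: real) = (real n + 1) * fact n" by (simp add: fact_Suc)
    have pS: "pochhammer ?d (Suc n) = pochhammer ?d n * (real n + ?d)" by (simp add: pochhammer_Suc add.commute)
    have sS: "real (Suc n) + ?c = real n + 1 + ?c" by simp
    show ?thesis unfolding f pS sS
      by (rule gen_h) (use pn nc nd jc in auto)
  qed
  finally show ?case .
qed



lemma gen_k: "(nn::real) \<noteq> 0 \<Longrightarrow> b \<noteq> 0 \<Longrightarrow> fj \<noteq> 0 \<Longrightarrow> P \<noteq> 0 \<Longrightarrow> w \<noteq> 0 \<Longrightarrow>
  2 / b * Q / fj * (a / nn) * (fn / P / w) = 2 * a / b * (fn / fj) * (Q / P) / (nn * w)"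
  by (simp add: field_simps)

lemma lim_shift: "(\<lambda>n. (real n + (z::real)) / real n) \<longlonglongrightarrow> 1"
  by real_asymp

lemma canc_g: "(g::real) \<noteq> 0 \<Longrightarrow> g * (x / g / y) = x / y" by simp

lemma canc_g2: "(g::real) \<noteq> 0 \<Longrightarrow> 2 / b * (x / g) / y * 1 * g = 2 * x / (b * y)" by simp

lemma e_lim:
  "(\<lambda>n. measure_pmf.expectation (pa_circuit m n) (F j) / real n powr (real m / (real m + 1)))
     \<longlonglongrightarrow> Gamma (real j + 1 / (real m + 1)) / Gamma (real j + 1)"
proof -
  let ?c = "1 / (real m + 1)"
  have c0: "?c > 0" by simp
  have pe: "real m / (real m + 1) = 1 - ?c" by (simp add: field_simps)
  have "(\<lambda>n. fact n / pochhammer ?c n / real n powr (1 - ?c) * (pochhammer ?c j / fact j))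
      \<longlonglongrightarrow> Gamma ?c * (pochhammer ?c j / fact j)"
    by (rule tendsto_mult[OF fact_poch_limit[OF c0] tendsto_const])
  note L = this
  have K: "Gamma ?c * (pochhammer ?c j / fact j) = Gamma (real j + ?c) / Gamma (real j + 1)"
  proof -
    have "?c \<notin> \<int>\<^sub>\<le>\<^sub>0" using c0 nonpos_Ints_nonpos by fastforce
    hence P0: "pochhammer ?c j = Gamma (?c + real j) / Gamma ?c" by (rule pochhammer_Gamma)
    have P: "pochhammer ?c j = Gamma (real j + ?c) / Gamma ?c" unfolding P0 by (simp only: add.commute)
    have G: "Gamma ?c \<noteq> 0" using Gamma_real_pos[OF c0] by linarith
    have FF: "Gamma (real j + 1) = fact j" using Gamma_fact[of j] by (simp add: add.commute)
    show ?thesis unfolding P FF by (rule canc_g[OF G])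
  qed
  have EV: "eventually (\<lambda>n. fact n / pochhammer ?c n / real n powr (1 - ?c) * (pochhammer ?c j / fact j)
      = measure_pmf.expectation (pa_circuit m n) (F j) / real n powr (real m / (real m + 1))) sequentially"
    using eventually_ge_at_top[of j]
  proof eventually_elim
    case (elim n)
    show ?case unfolding e_closed[OF elim] pe by (simp add: field_simps)
  qed
  from L have L2: "(\<lambda>n. fact n / pochhammer ?c n / real n powr (1 - ?c) * (pochhammer ?c j / fact j))
      \<longlonglongrightarrow> Gamma (real j + ?c) / Gamma (real j + 1)" by (simp only: K)
  show ?thesis using L2 EV by (rule Lim_transform_eventually)
qed

lemma h_lim:
  "(\<lambda>n. measure_pmf.expectation (pa_circuit m n) (Gf j) / real n powr (2 * real m / (real m + 1)))
     \<longlonglongrightarrow> 2 * Gamma (real j + 2 / (real m + 1)) / ((real j + 1 / (real m + 1)) * Gamma (real j + 1))"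
proof -
  let ?c = "1 / (real m + 1)"
  let ?d = "2 / (real m + 1)"
  let ?K = "2 / (real j + ?c) * pochhammer ?d j / fact j"
  have d0: "?d > 0" by simp
  have jc: "real j + ?c > 0" by (simp add: add_nonneg_pos)
  have pe: "2 * real m / (real m + 1) = 1 + (1 - ?d)" by (simp add: field_simps)
  have lim1: "(\<lambda>n. (real n + ?c) / real n) \<longlonglongrightarrow> 1" by (rule lim_shift)
  have "(\<lambda>n. ?K * ((real n + ?c) / real n) * (fact n / pochhammer ?d n / real n powr (1 - ?d)))
      \<longlonglongrightarrow> ?K * 1 * Gamma ?d"
    by (rule tendsto_mult[OF tendsto_mult[OF tendsto_const lim1] fact_poch_limit[OF d0]])
  note L = this
  have K: "?K * 1 * Gamma ?d = 2 * Gamma (real j + ?d) / ((real j + ?c) * Gamma (real j + 1))"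
  proof -
    have "?d \<notin> \<int>\<^sub>\<le>\<^sub>0" using d0 nonpos_Ints_nonpos by fastforce
    hence P0: "pochhammer ?d j = Gamma (?d + real j) / Gamma ?d" by (rule pochhammer_Gamma)
    have P: "pochhammer ?d j = Gamma (real j + ?d) / Gamma ?d" unfolding P0 by (simp only: add.commute)
    have G: "Gamma ?d \<noteq> 0" using Gamma_real_pos[OF d0] by linarith
    have FF: "Gamma (real j + 1) = fact j" using Gamma_fact[of j] by (simp add: add.commute)
    show ?thesis unfolding P FF by (rule canc_g2[OF G])
  qed
  have EV: "eventually (\<lambda>n. ?K * ((real n + ?c) / real n) * (fact n / pochhammer ?d n / real n powr (1 - ?d))
      = measure_pmf.expectation (pa_circuit m n) (Gf j) / real n powr (2 * real m / (real m + 1))) sequentially"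
    using eventually_ge_at_top[of "max j 1"]
  proof eventually_elim
    case (elim n)
    hence jn: "j \<le> n" and n0: "real n > 0" by auto
    have pw: "real n powr (1 + (1 - ?d)) = real n * real n powr (1 - ?d)"
    proof -
      have "real n powr (1 + (1 - ?d)) = real n powr 1 * real n powr (1 - ?d)" by (rule powr_add)
      moreover have "real n powr 1 = real n" using n0 by simp
      ultimately show ?thesis by simp
    qed
    have w: "real n powr (1 - ?d) \<noteq> 0" using n0 by simp
    have P: "pochhammer ?d n \<noteq> 0" by (simp add: pochhammer_pos less_imp_neq[symmetric])
    show ?case unfolding h_closed[OF jn] pe pw
      by (rule gen_k) (use n0 jc w P in auto)
  qed
  from L have L2: "(\<lambda>n. ?K * ((real n + ?c) / real n) * (fact n / pochhammer ?d n / real n powr (1 - ?d)))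
      \<longlonglongrightarrow> 2 * Gamma (real j + ?d) / ((real j + ?c) * Gamma (real j + 1))" by (simp only: K)
  show ?thesis using L2 EV by (rule Lim_transform_eventually)
qed



lemma exp_plus_const:
  assumes "finite (set_pmf p)"
  shows "measure_pmf.expectation p (\<lambda>x. f x + k) = measure_pmf.expectation p f + (k::real)"
proof -
  have "measure_pmf.expectation p (\<lambda>x. f x + k) = measure_pmf.expectation p f + measure_pmf.expectation p (\<lambda>x. k)"
    by (rule Bochner_Integration.integral_add) (use assms in \<open>auto intro: integrable_measure_pmf_finite\<close>)
  thus ?thesis by simp
qed

lemma exp_lin3:
  assumes "finite (set_pmf p)"
  shows "measure_pmf.expectation p (\<lambda>x. a * f x + b * g x + k) =
     a * measure_pmf.expectation p f + b * measure_pmf.expectation p g + (k::real)"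
proof -
  have i: "integrable (measure_pmf p) h" for h :: "_ \<Rightarrow> real"
    using assms by (rule integrable_measure_pmf_finite)
  have "measure_pmf.expectation p (\<lambda>x. a * f x + b * g x + k) =
      measure_pmf.expectation p (\<lambda>x. a * f x + b * g x) + k"
    by (rule exp_plus_const[OF assms])
  also have "measure_pmf.expectation p (\<lambda>x. a * f x + b * g x) =
      measure_pmf.expectation p (\<lambda>x. a * f x) + measure_pmf.expectation p (\<lambda>x. b * g x)"
    by (rule Bochner_Integration.integral_add[OF i i])
  finally show ?thesis by simp
qed

lemma deg_eq:
  assumes E: "E \<in> set_pmf (pa_circuit m n)" and jn: "j \<le> n"
  shows "real (degree E j) = F j E + (real (if 1 \<le> j then m else 0) - 1)"
  using pa_supp[OF E] jn by (simp add: degree_def F_def)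

lemma key_ineq:
  fixes a b g u v :: real
  assumes pos: "a > 0" "b > 0" "g > 0" "u > 0" and v: "v \<le> 2 * u"
    and h: "u^2 * a^2 < g * v * b"
  shows "a^2 / g^2 < 2 * b / (u * g)"
proof -
  have "u * (u * a^2) < u * (2 * g * b)"
  proof -
    have "g * v * b \<le> g * (2 * u) * b" using v pos by (intro mult_right_mono mult_left_mono) auto
    thus ?thesis using h by (simp add: power2_eq_square algebra_simps)
  qed
  hence "u * a^2 < 2 * g * b" using pos by simp
  hence "u * a^2 < 2 * (b * g)" by (simp add: mult_ac)
  thus ?thesis using pos by (simp add: field_simps power2_eq_square)
qed

lemma const_pos:
  fixes m j :: nat
  shows "(Gamma (real j + 1 / (real m + 1)))\<^sup>2 / (Gamma (real j + 1))\<^sup>2 <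
     2 * Gamma (real j + 2 / (real m + 1)) / ((real j + 1 / (real m + 1)) * Gamma (real j + 1))"
proof -
  let ?c = "1 / (real m + 1)"
  have c0: "?c > 0" by simp
  have c1: "?c \<le> 1" by simp
  have u: "real j + ?c > 0" by (simp add: add_nonneg_pos)
  have x: "?c < real j + 1 + ?c" by simp
  have S: "(Gamma (real j + 1 + ?c))^2 < Gamma (real j + 1 + ?c - ?c) * Gamma (real j + 1 + ?c + ?c)"
    by (rule Gamma_sq_less[OF c0 x])
  have e1: "real j + 1 + ?c - ?c = real j + 1" by simp
  have e2: "real j + 1 + ?c + ?c = (real j + 2 / (real m + 1)) + 1" by (simp add: field_simps)
  have e3: "real j + 1 + ?c = (real j + ?c) + 1" by simp
  have nz: "z > 0 \<Longrightarrow> z \<notin> \<int>\<^sub>\<le>\<^sub>0" for z :: real using nonpos_Ints_nonpos by fastforce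
  have d: "real j + 2 / (real m + 1) > 0" by (simp add: add_nonneg_pos)
  have g1: "Gamma (real j + 1 + ?c) = (real j + ?c) * Gamma (real j + ?c)"
    unfolding e3 by (rule Gamma_plus1[OF nz[OF u]])
  have g2: "Gamma (real j + 1 + ?c + ?c) = (real j + 2 / (real m + 1)) * Gamma (real j + 2 / (real m + 1))"
    unfolding e2 by (rule Gamma_plus1[OF nz[OF d]])
  have h: "(real j + ?c)^2 * (Gamma (real j + ?c))^2 <
      Gamma (real j + 1) * (real j + 2 / (real m + 1)) * Gamma (real j + 2 / (real m + 1))"
    using S unfolding e1 g1 g2 by (simp add: power_mult_distrib mult_ac)
  show ?thesis
  proof (rule key_ineq[OF _ _ _ u _ h])
    show "Gamma (real j + ?c) > 0" using u by simp
    show "Gamma (real j + 2 / (real m + 1)) > 0" using d by simp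
    show "Gamma (real j + 1) > 0" by (simp add: add_nonneg_pos)
    show "real j + 2 / (real m + 1) \<le> 2 * (real j + ?c)" by simp
  qed
qed

theorem corollary2:
  fixes m j :: nat
  assumes "m \<ge> 1"
  shows "((\<lambda>n. measure_pmf.expectation (pa_circuit m n) (\<lambda>E. real (degree E j)))
           \<sim>[at_top] (\<lambda>n. Gamma (real j + 1 / (real m + 1)) / Gamma (real j + 1)
                          * real n powr (real m / (real m + 1)))) \<and>
         ((\<lambda>n. measure_pmf.variance (pa_circuit m n) (\<lambda>E. real (degree E j)))
           \<sim>[at_top] (\<lambda>n. (2 * (real m + 1) * Gamma (real j + 2 / (real m + 1))
                             / (((real m + 1) * real j + 1) * Gamma (real j + 1))
                           - (Gamma (real j + 1 / (real m + 1)))\<^sup>2 / (Gamma (real j + 1))\<^sup>2)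
                          * real n powr (2 * real m / (real m + 1))))"
proof -
  let ?p = "real m / (real m + 1)"
  let ?c = "1 / (real m + 1)"
  define e where "e n = measure_pmf.expectation (pa_circuit m n) (F j)" for n
  define h where "h n = measure_pmf.expectation (pa_circuit m n) (Gf j)" for n
  define k0 where "k0 = real (if 1 \<le> j then m else 0) - 1"
  define K1 where "K1 = Gamma (real j + ?c) / Gamma (real j + 1)"
  define A where "A = 2 * Gamma (real j + 2 / (real m + 1)) / ((real j + ?c) * Gamma (real j + 1))"
  have p0: "?p > 0" using assms by simp
  have jc: "real j + ?c > 0" by (simp add: add_nonneg_pos)
  have K1pos: "K1 > 0" unfolding K1_def using jc by (simp add: add_nonneg_pos)
  have ED: "measure_pmf.expectation (pa_circuit m n) (\<lambda>E. real (degree E j)) = e n + k0"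
    if "j \<le> n" for n
  proof -
    have "measure_pmf.expectation (pa_circuit m n) (\<lambda>E. real (degree E j))
        = measure_pmf.expectation (pa_circuit m n) (\<lambda>E. F j E + k0)"
      by (rule exp_cong) (use deg_eq[OF _ that] in \<open>simp add: k0_def\<close>)
    also have "\<dots> = e n + k0" unfolding e_def by (rule exp_plus_const[OF finite_pa])
    finally show ?thesis .
  qed
  have VD: "measure_pmf.variance (pa_circuit m n) (\<lambda>E. real (degree E j)) = h n - e n - (e n)^2"
    if "j \<le> n" for n
  proof -
    have "measure_pmf.variance (pa_circuit m n) (\<lambda>E. real (degree E j))
       = measure_pmf.expectation (pa_circuit m n) (\<lambda>E. 1 * Gf j E + (- 1 - 2 * e n) * F j E + (e n)^2)"
    proof (rule exp_cong)
      fix E assume E: "E \<in> set_pmf (pa_circuit m n)"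
      show "(real (degree E j) - measure_pmf.expectation (pa_circuit m n) (\<lambda>E. real (degree E j)))^2
          = 1 * Gf j E + (- 1 - 2 * e n) * F j E + (e n)^2"
        unfolding ED[OF that] deg_eq[OF E that] k0_def[symmetric]
        by (simp add: Gf_def power2_eq_square algebra_simps)
    qed
    also have "\<dots> = 1 * h n + (- 1 - 2 * e n) * e n + (e n)^2"
      unfolding h_def e_def by (rule exp_lin3[OF finite_pa])
    finally show ?thesis by (simp add: power2_eq_square algebra_simps)
  qed
  have zero: "(\<lambda>n. k / real n powr ?p) \<longlonglongrightarrow> 0" for k :: real
  proof -
    have "(\<lambda>n. real n powr (- ?p)) \<longlonglongrightarrow> 0"
      by (rule tendsto_neg_powr) (use p0 filterlim_real_sequentially in auto)
    hence "(\<lambda>n. k * real n powr (- ?p)) \<longlonglongrightarrow> k * 0" by (rule tendsto_mult[OF tendsto_const])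
    moreover have "k * real n powr (- ?p) = k / real n powr ?p" for n
      by (simp add: powr_minus divide_inverse)
    ultimately show ?thesis by simp
  qed
  have eL: "(\<lambda>n. e n / real n powr ?p) \<longlonglongrightarrow> K1"
    unfolding e_def K1_def by (rule e_lim)
  have hL: "(\<lambda>n. h n / real n powr (2 * real m / (real m + 1))) \<longlonglongrightarrow> A"
    unfolding h_def A_def by (rule h_lim)
  show ?thesis
  proof
    have L: "(\<lambda>n. e n / real n powr ?p + k0 / real n powr ?p) \<longlonglongrightarrow> K1 + 0"
      by (rule tendsto_add[OF eL zero])
    have EV: "eventually (\<lambda>n. e n / real n powr ?p + k0 / real n powr ?p =
        measure_pmf.expectation (pa_circuit m n) (\<lambda>E. real (degree E j)) / real n powr ?p) sequentially"
      using eventually_ge_at_top[of j]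
    proof eventually_elim
      case (elim n)
      show ?case unfolding ED[OF elim] by (simp add: add_divide_distrib)
    qed
    have "(\<lambda>n. measure_pmf.expectation (pa_circuit m n) (\<lambda>E. real (degree E j)) / real n powr ?p)
        \<longlonglongrightarrow> K1"
      using L EV by (simp add: Lim_transform_eventually)
    thus "(\<lambda>n. measure_pmf.expectation (pa_circuit m n) (\<lambda>E. real (degree E j)))
           \<sim>[at_top] (\<lambda>n. Gamma (real j + 1 / (real m + 1)) / Gamma (real j + 1)
                          * real n powr (real m / (real m + 1)))"
      unfolding K1_def
    proof (rule asymp_equivI'_const)
      show "Gamma (real j + 1 / (real m + 1)) / Gamma (real j + 1) \<noteq> 0"
        using K1pos unfolding K1_def by linarith
    qed
  next
    let ?q = "2 * real m / (real m + 1)"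
    define K2 where "K2 = (2 * (real m + 1) * Gamma (real j + 2 / (real m + 1))
                             / (((real m + 1) * real j + 1) * Gamma (real j + 1))
                           - (Gamma (real j + 1 / (real m + 1)))\<^sup>2 / (Gamma (real j + 1))\<^sup>2)"
    have K2A: "K2 = A - K1^2"
    proof -
      have "(real m + 1) * real j + 1 = (real m + 1) * (real j + ?c)" by (simp add: field_simps)
      hence "2 * (real m + 1) * Gamma (real j + 2 / (real m + 1))
             / (((real m + 1) * real j + 1) * Gamma (real j + 1)) = A"
        unfolding A_def by (simp add: field_simps)
      thus ?thesis unfolding K2_def K1_def by (simp add: power_divide)
    qed
    have K2pos: "K2 \<noteq> 0"
      using const_pos[of j m] unfolding K2A A_def K1_def by (simp add: power_divide)
    have L: "(\<lambda>n. h n / real n powr ?q - (e n / real n powr ?p) * (1 / real n powr ?p)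
               - (e n / real n powr ?p)^2) \<longlonglongrightarrow> A - K1 * 0 - K1^2"
      by (intro tendsto_diff tendsto_mult tendsto_power hL eL zero)
    have EV: "eventually (\<lambda>n. h n / real n powr ?q - (e n / real n powr ?p) * (1 / real n powr ?p)
               - (e n / real n powr ?p)^2 =
        measure_pmf.variance (pa_circuit m n) (\<lambda>E. real (degree E j)) / real n powr ?q) sequentially"
      using eventually_ge_at_top[of "max j 1"]
    proof eventually_elim
      case (elim n)
      hence jn: "j \<le> n" and n0: "real n > 0" by auto
      have w: "real n powr ?p > 0" using n0 by simp
      have pw: "real n powr ?q = (real n powr ?p)^2"
      proof -
        have a1: "?p + ?p = (real m + real m) / (real m + 1)" by (rule add_divide_distrib[symmetric])
        have "?q = ?p + ?p" unfolding a1 by simp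
        hence "real n powr ?q = real n powr ?p * real n powr ?p" by (simp only: powr_add)
        thus ?thesis by (simp add: power2_eq_square)
      qed
      show ?case unfolding VD[OF jn] pw using w
        by (simp add: field_simps power2_eq_square)
    qed
    have "(\<lambda>n. measure_pmf.variance (pa_circuit m n) (\<lambda>E. real (degree E j)) / real n powr ?q)
        \<longlonglongrightarrow> K2"
      using Lim_transform_eventually[OF L EV] by (simp add: K2A)
    thus "(\<lambda>n. measure_pmf.variance (pa_circuit m n) (\<lambda>E. real (degree E j)))
           \<sim>[at_top] (\<lambda>n. (2 * (real m + 1) * Gamma (real j + 2 / (real m + 1))
                             / (((real m + 1) * real j + 1) * Gamma (real j + 1))
                           - (Gamma (real j + 1 / (real m + 1)))\<^sup>2 / (Gamma (real j + 1))\<^sup>2)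
                          * real n powr (2 * real m / (real m + 1)))"
      unfolding K2_def[symmetric] by (rule asymp_equivI'_const[OF _ K2pos])
  qed
qed

end
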